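(* Let $p\ge 3$ be an integer, let $T$ be a tree and let $\ell=|V(T^{p+1})|$. Then $T^{p+1}\subseteq P_\ell\vee K((p-1)\ell;p-1)$ and $T^{p+1}\subseteq \ell P_2\vee K(2(p-1)\ell;p-1)$.
   Context: For a graph $F$ and integer $p\ge1$, the edge blow-up $F^{p+1}$ is the graph obtained from $F$ by replacing each edge by a clique $K_{p+1}$ containing that edge, where the newly added vertices of the different cliques are all distinct. $P_\ell$ is the path on $\ell$ vertices, $\ell P_2$ is a matching of $\ell$ edges, $K(N;q)$ is the complete $q$-partite graph on $N$ vertices with part sizes differing by at most one, $\vee$ denotes the join of vertex-disjoint graphs, and $\subseteq$ means "is isomorphic to a subgraph of". *)

theory Defs
  imports Main
begin

record 'a ugraph =
  verts :: "'a set"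
  edges :: "'a set set"

definition wf_graph :: "'a ugraph \<Rightarrow> bool" where
  "wf_graph G \<longleftrightarrow> finite (verts G) \<and>
     (\<forall>e\<in>edges G. e \<subseteq> verts G \<and> card e = 2)"

definition adj :: "'a ugraph \<Rightarrow> 'a \<Rightarrow> 'a \<Rightarrow> bool" where
  "adj G u v \<longleftrightarrow> {u, v} \<in> edges G"

definition connected_graph :: "'a ugraph \<Rightarrow> bool" where
  "connected_graph G \<longleftrightarrow> (\<forall>u\<in>verts G. \<forall>v\<in>verts G. (adj G)\<^sup>*\<^sup>* u v)"

definition is_cycle :: "'a ugraph \<Rightarrow> 'a list \<Rightarrow> bool" where
  "is_cycle G cs \<longleftrightarrow> length cs \<ge> 3 \<and> distinct cs \<and> set cs \<subseteq> verts G \<and>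
     (\<forall>i. Suc i < length cs \<longrightarrow> adj G (cs ! i) (cs ! Suc i)) \<and>
     adj G (last cs) (hd cs)"

definition is_tree :: "'a ugraph \<Rightarrow> bool" where
  "is_tree G \<longleftrightarrow> wf_graph G \<and> verts G \<noteq> {} \<and> connected_graph G \<and>
     \<not> (\<exists>cs. is_cycle G cs)"

text \<open>Edge blow-up F^{p+1}: each edge e gets p-1 new vertices Inr (e,i), i < p-1,
  forming a clique K_{p+1} together with the ends of e.\<close>
definition blowup_clique :: "nat \<Rightarrow> 'a set \<Rightarrow> ('a + 'a set \<times> nat) set" where
  "blowup_clique p e = Inl ` e \<union> {Inr (e, i) | i. i < p - 1}"

definition edge_blowup :: "nat \<Rightarrow> 'a ugraph \<Rightarrow> ('a + 'a set \<times> nat) ugraph" where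
  "edge_blowup p G =
     \<lparr> verts = Inl ` verts G \<union> {Inr (e, i) | e i. e \<in> edges G \<and> i < p - 1},
       edges = {{x, y} | x y e. e \<in> edges G \<and> x \<in> blowup_clique p e \<and>
                                 y \<in> blowup_clique p e \<and> x \<noteq> y} \<rparr>"

definition path_graph :: "nat \<Rightarrow> nat ugraph" where
  "path_graph l = \<lparr> verts = {0..<l}, edges = {{i, Suc i} | i. Suc i < l} \<rparr>"

definition matching_graph :: "nat \<Rightarrow> nat ugraph" where
  "matching_graph l = \<lparr> verts = {0..<2*l}, edges = {{2*i, 2*i+1} | i. i < l} \<rparr>"

definition turan_graph :: "nat \<Rightarrow> nat \<Rightarrow> nat ugraph" where
  "turan_graph N q = \<lparr> verts = {0..<N},
     edges = {{i, j} | i j. i < N \<and> j < N \<and> i mod q \<noteq> j mod q} \<rparr>"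

definition graph_join :: "'a ugraph \<Rightarrow> 'b ugraph \<Rightarrow> ('a + 'b) ugraph" where
  "graph_join G H = \<lparr> verts = Inl ` verts G \<union> Inr ` verts H,
     edges = (\<lambda>e. Inl ` e) ` edges G \<union> (\<lambda>e. Inr ` e) ` edges H \<union>
             {{Inl x, Inr y} | x y. x \<in> verts G \<and> y \<in> verts H} \<rparr>"

definition subgraph_iso :: "'a ugraph \<Rightarrow> 'b ugraph \<Rightarrow> bool" where
  "subgraph_iso H G \<longleftrightarrow> (\<exists>f. inj_on f (verts H) \<and> f ` verts H \<subseteq> verts G \<and>
     (\<forall>e\<in>edges H. f ` e \<in> edges G))"

end

theory Submission
  imports Defs
begin

fun walk :: "'a ugraph \<Rightarrow> 'a list \<Rightarrow> bool" where
  "walk G [] = True"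
| "walk G [x] = True"
| "walk G (x # y # xs) = (adj G x y \<and> walk G (y # xs))"

lemma walk_append:
  "walk G (xs @ ys) \<longleftrightarrow> walk G xs \<and> walk G ys \<and> (xs \<noteq> [] \<and> ys \<noteq> [] \<longrightarrow> adj G (last xs) (hd ys))"
  by (induction G xs rule: walk.induct) (cases ys; auto)+

lemma adj_sym: "adj G u v = adj G v u"
  by (simp add: adj_def insert_commute)

lemma walk_rev: "walk G (rev xs) = walk G xs"
  by (induction G xs rule: walk.induct) (auto simp: walk_append adj_sym)

lemma walk_Cons: "walk G (x # xs) \<Longrightarrow> walk G xs"
  using walk_append[of G "[x]" xs] by simp

lemma walk_nth: "walk G xs \<Longrightarrow> Suc i < length xs \<Longrightarrow> adj G (xs!i) (xs ! Suc i)"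
proof (induction G xs arbitrary: i rule: walk.induct)
  case (3 G x y xs)
  then show ?case by (cases i) auto
qed auto

lemma adj_irrefl: "wf_graph G \<Longrightarrow> \<not> adj G x x"
  by (auto simp: wf_graph_def adj_def)

lemma adj_verts: "wf_graph G \<Longrightarrow> adj G x y \<Longrightarrow> x \<in> verts G \<and> y \<in> verts G"
  by (auto simp: wf_graph_def adj_def)

lemma walk_verts: "wf_graph G \<Longrightarrow> walk G xs \<Longrightarrow> length xs \<ge> 2 \<Longrightarrow> set xs \<subseteq> verts G"
proof (induction G xs rule: walk.induct)
  case (3 G x y xs)
  then show ?case using adj_verts[of G x y] by (cases xs) auto
qed auto

definition cwalk :: "'a ugraph \<Rightarrow> 'a list \<Rightarrow> bool" where
  "cwalk G cs \<longleftrightarrow> cs \<noteq> [] \<and> walk G cs \<and> adj G (last cs) (hd cs)"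

lemma cwalk_rot: "cwalk G (xs @ ys) \<Longrightarrow> cwalk G (ys @ xs)"
  by (cases "xs = []"; cases "ys = []") (auto simp: cwalk_def walk_append)

lemma odd_cwalk: "wf_graph G \<Longrightarrow> cwalk G cs \<Longrightarrow> odd (length cs) \<Longrightarrow> \<exists>c. is_cycle G c"
proof (induction "length cs" arbitrary: cs rule: less_induct)
  case less
  show ?case
  proof (cases "distinct cs")
    case True
    have ne: "cs \<noteq> []" "walk G cs" "adj G (last cs) (hd cs)" using less(3) by (auto simp: cwalk_def)
    have "length cs \<noteq> 1"
    proof
      assume "length cs = 1"
      then obtain x where "cs = [x]" by (cases cs) auto
      then show False using ne adj_irrefl[OF less(2)] by auto
    qed
    with less(4) have l3: "length cs \<ge> 3" by presburger
    have "set cs \<subseteq> verts G" using walk_verts[OF less(2) ne(2)] l3 by auto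
    then have "is_cycle G cs" using l3 True ne walk_nth[OF ne(2)] by (auto simp: is_cycle_def)
    then show ?thesis by blast
  next
    case False
    then obtain A x B C where cs: "cs = A @ [x] @ B @ [x] @ C" using not_distinct_decomp by blast
    have "cwalk G (([x] @ B @ [x] @ C) @ A)"
      using cwalk_rot[of G A "[x] @ B @ [x] @ C"] less(3) cs by simp
    then have w: "walk G ((x # B) @ (x # C @ A))" "adj G (last (x # C @ A)) x"
      by (auto simp: cwalk_def)
    have w2: "walk G (x # B)" "walk G (x # C @ A)" "adj G (last (x # B)) x"
      using w(1) walk_append[of G "x # B" "x # C @ A"] by auto
    have c1: "cwalk G (x # B)" using w2 by (auto simp: cwalk_def)
    have c2: "cwalk G (x # C @ A)" using w w2 by (auto simp: cwalk_def)
    have len: "length cs = length (x # B) + length (x # C @ A)" using cs by simp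
    show ?thesis
    proof (cases "odd (length (x # B))")
      case True
      show ?thesis by (rule less(1)[OF _ less(2) c1 True]) (use len in simp)
    next
      case False
      then have "odd (length (x # C @ A))" using len less(4) by simp
      then show ?thesis by (intro less(1)[OF _ less(2) c2]) (use len in simp_all)
    qed
  qed
qed

lemma rtranclp_walk: "(adj G)\<^sup>*\<^sup>* r v \<Longrightarrow> \<exists>ws. walk G (r # ws) \<and> last (r # ws) = v"
proof (induction rule: rtranclp_induct)
  case base
  then show ?case by (intro exI[of _ "[]"]) simp
next
  case (step y z)
  then obtain ws where "walk G (r # ws)" "last (r # ws) = y" by blast
  then show ?case using step(2)
    by (intro exI[of _ "ws @ [z]"]) (simp add: walk_append[of G "r # ws" "[z]", simplified])
qed

lemma tree_col:
  assumes "is_tree T"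
  shows "\<exists>col::'a \<Rightarrow> nat. (\<forall>u. col u < 2) \<and> (\<forall>u v. adj T u v \<longrightarrow> col u \<noteq> col v)"
proof -
  have wf: "wf_graph T" and ne: "verts T \<noteq> {}" and con: "connected_graph T"
    and nc: "\<not> (\<exists>cs. is_cycle T cs)" using assms by (auto simp: is_tree_def)
  obtain r where r: "r \<in> verts T" using ne by blast
  define W where "W v = (SOME ws. walk T (r # ws) \<and> last (r # ws) = v)" for v
  have W: "walk T (r # W v) \<and> last (r # W v) = v" if "v \<in> verts T" for v
  proof -
    have "(adj T)\<^sup>*\<^sup>* r v" using con r that by (auto simp: connected_graph_def)
    then have "\<exists>ws. walk T (r # ws) \<and> last (r # ws) = v"
      by (rule rtranclp_walk)
    then have "(\<lambda>ws. walk T (r # ws) \<and> last (r # ws) = v) (SOME ws. walk T (r # ws) \<and> last (r # ws) = v)"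
      by (rule someI_ex)
    then show ?thesis unfolding W_def by simp
  qed
  define col where "col v = length (W v) mod 2" for v
  have "col u \<noteq> col v" if a: "adj T u v" for u v
  proof
    assume eq: "col u = col v"
    have uv: "u \<in> verts T" "v \<in> verts T" using adj_verts[OF wf a] by blast+
    have Wu1: "walk T (r # W u)" and Wu2: "last (r # W u) = u" using W[OF uv(1)] by blast+
    have Wv1: "walk T (r # W v)" and Wv2: "last (r # W v) = v" using W[OF uv(2)] by blast+
    define L where "L = (r # W u) @ rev (W v)"
    have wv: "walk T (W v)" using Wv1 by (rule walk_Cons)
    have "walk T L"
    proof -
      have h: "W v \<noteq> [] \<Longrightarrow> hd (rev (W v)) = v" using Wv2 by (simp add: hd_rev)
      have wr: "walk T (rev (W v))" using wv walk_rev by blast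
      have "walk T ((r # W u) @ rev (W v))"
        unfolding walk_append using Wu1 Wu2 wr h a by simp
      then show ?thesis unfolding L_def .
    qed
    moreover have "adj T (last L) (hd L)"
    proof (cases "W v = []")
      case True
      then have L: "L = r # W u" by (simp add: L_def)
      have "last L = u" unfolding L using Wu2 .
      moreover have "hd L = v" using L Wv2 True by simp
      ultimately show ?thesis using a by simp
    next
      case False
      have "adj T r (hd (W v))" using Wv1 walk_append[of T "[r]" "W v"] False by simp
      then show ?thesis using False by (simp add: L_def last_rev adj_sym)
    qed
    moreover have "odd (length L)"
    proof -
      have ll: "length L = Suc (length (W u) + length (W v))" by (simp add: L_def)
      have m: "length (W u) mod 2 = length (W v) mod 2" using eq by (simp add: col_def)
      have "odd (Suc (a + b))" if "a mod 2 = b mod 2" for a b :: nat using that by presburger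
      then show ?thesis using ll m by metis
    qed
    moreover have "L \<noteq> []" by (simp add: L_def)
    ultimately have "cwalk T L" by (simp add: cwalk_def)
    then show False using odd_cwalk[OF wf, of L] nc \<open>odd (length L)\<close> by blast
  qed
  then show ?thesis by (intro exI[of _ col]) (auto simp: col_def)
qed



lemma divmod_t1: "(b::nat) < q \<Longrightarrow> (q * a + b) div q = a"
  by (metis add.commute div_less div_mult_self2 add_0 gr_implies_not0)
lemma divmod_t2: "(b::nat) < q \<Longrightarrow> (q * a + b) mod q = b"
  by simp
lemma divmod_inj: "(q::nat) * a + b = q * c + d \<Longrightarrow> b < q \<Longrightarrow> d < q \<Longrightarrow> a = c \<and> b = d"
  by (metis divmod_t1 divmod_t2)

lemma bound_lt: "(c::nat) < q \<Longrightarrow> k < l \<Longrightarrow> q * l \<le> N \<Longrightarrow> q * k + c < N"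
proof -
  assume a: "c < q" "k < l" "q * l \<le> N"
  have "q * (k + 1) \<le> q * l" using a(2) by (intro mult_le_mono2) simp
  then show ?thesis using a by simp
qed

lemma turan_edge: fixes X :: "'x ugraph" shows "a < N \<Longrightarrow> b < N \<Longrightarrow> a mod q \<noteq> b mod q \<Longrightarrow>
   {Inr a, Inr b} \<in> edges (graph_join X (turan_graph N q))"
proof -
  assume a: "a < N" "b < N" "a mod q \<noteq> b mod q"
  have "{a, b} \<in> edges (turan_graph N q)" using a by (auto simp: turan_graph_def)
  then have "(Inr :: nat \<Rightarrow> 'x + nat) ` {a, b} \<in> (\<lambda>e. Inr ` e) ` edges (turan_graph N q)" by (rule imageI)
  then show ?thesis by (simp add: graph_join_def)
qed

lemma mixed_edge: "a \<in> verts X \<Longrightarrow> b < N \<Longrightarrow>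
   {Inl a, Inr b} \<in> edges (graph_join X (turan_graph N q)) \<and>
   {Inr b, Inl a} \<in> edges (graph_join X (turan_graph N q))"
  unfolding graph_join_def turan_graph_def by (auto simp: insert_commute)

lemma path_edge: fixes X :: "nat ugraph" shows "{a, b} \<in> edges X \<Longrightarrow> {Inl a, Inl b} \<in> edges (graph_join X (turan_graph N q))"
proof -
  assume a: "{a, b} \<in> edges X"
  then have "(Inl :: nat \<Rightarrow> nat + nat) ` {a, b} \<in> (\<lambda>e. Inl ` e) ` edges X" by (rule imageI)
  then show ?thesis by (simp add: graph_join_def)
qed

lemma verts_blowup: "x \<in> verts (edge_blowup p T) \<longleftrightarrow>
   (\<exists>v\<in>verts T. x = Inl v) \<or> (\<exists>e i. x = Inr (e, i) \<and> e \<in> edges T \<and> i < p - 1)"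
  by (auto simp: edge_blowup_def)

lemma clique_mem: "x \<in> blowup_clique p e \<longleftrightarrow> (\<exists>v\<in>e. x = Inl v) \<or> (\<exists>i. x = Inr (e, i) \<and> i < p - 1)"
  by (auto simp: blowup_clique_def)

definition emb :: "nat \<Rightarrow> ('a \<Rightarrow> nat) \<Rightarrow> (('a + 'a set \<times> nat) \<Rightarrow> nat) \<Rightarrow> ('a set \<Rightarrow> nat)
    \<Rightarrow> ('a + 'a set \<times> nat) \<Rightarrow> nat + nat" where
  "emb p col g h x = (case x of Inl v \<Rightarrow> Inr ((p - 1) * g x + col v)
      | Inr (e, i) \<Rightarrow> (if i < 2 then Inl (2 * h e + i) else Inr ((p - 1) * g x + i)))"

lemma emb_Inl: "emb p col g h (Inl v) = Inr ((p - 1) * g (Inl v) + col v)"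
  by (simp add: emb_def)
lemma emb_Inr: "emb p col g h (Inr (e, i)) = (if i < 2 then Inl (2 * h e + i) else Inr ((p - 1) * g (Inr (e, i)) + i))"
  by (simp add: emb_def)

lemma embed:
  fixes p :: nat and T :: "'a ugraph" and X :: "nat ugraph" and col :: "'a \<Rightarrow> nat"
  assumes p: "p \<ge> 3" and wf: "wf_graph T"
    and col1: "\<And>u. col u < 2" and col2: "\<And>u v. adj T u v \<Longrightarrow> col u \<noteq> col v"
    and l: "l = card (verts (edge_blowup p T))"
    and XV: "{0..<2 * card (edges T)} \<subseteq> verts X"
    and XE: "\<And>k. k < card (edges T) \<Longrightarrow> {2 * k, Suc (2 * k)} \<in> edges X"
    and N: "(p - 1) * l \<le> N"
  shows "subgraph_iso (edge_blowup p T) (graph_join X (turan_graph N (p - 1)))"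
proof -
  define B where "B = edge_blowup p T"
  define q where "q = p - 1"
  have q2: "q \<ge> 2" using p by (simp add: q_def)
  have finE: "finite (edges T)"
  proof (rule finite_subset)
    show "edges T \<subseteq> Pow (verts T)" using wf by (auto simp: wf_graph_def)
    show "finite (Pow (verts T))" using wf by (simp add: wf_graph_def)
  qed
  have VB: "verts B = Inl ` verts T \<union> (\<lambda>(e, i). Inr (e, i)) ` (edges T \<times> {..<q})"
    by (auto simp: B_def q_def edge_blowup_def)
  have finB: "finite (verts B)" using VB finE wf by (simp add: wf_graph_def)
  have "card ((\<lambda>(e, i). Inr (e, i)) ` (edges T \<times> {..<q}) :: ('a + 'a set \<times> nat) set) = card (edges T) * q"
    by (subst card_image) (auto simp: inj_on_def card_cartesian_product)
  moreover have "card ((\<lambda>(e, i). Inr (e, i)) ` (edges T \<times> {..<q}) :: ('a + 'a set \<times> nat) set) \<le> l"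
    unfolding l B_def[symmetric] using finB VB by (intro card_mono) auto
  ultimately have cardE: "2 * card (edges T) \<le> l" using q2
    by (metis le_trans mult.commute mult_le_mono2)
  obtain g where g: "bij_betw g (verts B) {0..<l}" using ex_bij_betw_finite_nat[OF finB] l B_def by auto
  obtain h where h: "bij_betw h (edges T) {0..<card (edges T)}" using ex_bij_betw_finite_nat[OF finE] by auto
  have gl: "g x < l" if "x \<in> verts B" for x using g that by (auto dest: bij_betwE)
  have ginj: "inj_on g (verts B)" using g by (rule bij_betw_imp_inj_on)
  have hl: "h e < card (edges T)" if "e \<in> edges T" for e using h that by (auto dest: bij_betwE)
  have hinj: "inj_on h (edges T)" using h by (rule bij_betw_imp_inj_on)
  define f where "f = emb p col g h"
  have fL: "f (Inl v) = Inr (q * g (Inl v) + col v)" for v by (simp add: f_def emb_Inl q_def)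
  have fR: "f (Inr (e, i)) = (if i < 2 then Inl (2 * h e + i) else Inr (q * g (Inr (e, i)) + i))" for e i
    by (simp add: f_def emb_Inr q_def)
  note fdefs = fL fR
  have VBm: "x \<in> verts B \<longleftrightarrow> (\<exists>v\<in>verts T. x = Inl v) \<or> (\<exists>e i. x = Inr (e, i) \<and> e \<in> edges T \<and> i < q)" for x
    unfolding B_def q_def by (rule verts_blowup)
  have colq: "col u < q" for u using col1[of u] q2 by linarith
  have inj: "inj_on f (verts B)"
  proof (rule inj_onI)
    fix x y assume x: "x \<in> verts B" and y: "y \<in> verts B" and fxy: "f x = f y"
    show "x = y"
    proof (cases "\<exists>e i. x = Inr (e, i) \<and> e \<in> edges T \<and> i < 2")
      case True
      then obtain e i where xe: "x = Inr (e, i)" "e \<in> edges T" "i < 2" by blast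
      then have fx: "f x = Inl (2 * h e + i)" by (simp add: fdefs)
      then obtain e' j where ye: "y = Inr (e', j)" "e' \<in> edges T" "j < 2"
        using y fxy unfolding VBm by (auto simp: fdefs split: if_splits)
      then have "2 * h e + i = 2 * h e' + j" using fx fxy by (simp add: fdefs)
      then have "h e = h e' \<and> i = j" using divmod_inj[of 2 "h e" i "h e'" j] xe ye by simp
      then show ?thesis using hinj xe ye by (auto dest: inj_onD)
    next
      case False
      then have "\<exists>c. c < q \<and> f x = Inr (q * g x + c)"
        using x colq unfolding VBm by (auto simp: fdefs)
      then obtain c where c: "c < q" "f x = Inr (q * g x + c)" by blast
      have "\<not> (\<exists>e i. y = Inr (e, i) \<and> e \<in> edges T \<and> i < 2)"
        using c fxy by (auto simp: fdefs)
      then have "\<exists>d. d < q \<and> f y = Inr (q * g y + d)"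
        using y colq unfolding VBm by (auto simp: fdefs)
      then obtain d where d: "d < q" "f y = Inr (q * g y + d)" by blast
      have "g x = g y" using divmod_inj[of q "g x" c "g y" d] c d fxy by simp
      then show ?thesis using ginj x y by (auto dest: inj_onD)
    qed
  qed
  have rng: "f ` verts B \<subseteq> verts (graph_join X (turan_graph N q))"
  proof
    fix z assume "z \<in> f ` verts B"
    then obtain x where x: "x \<in> verts B" and z: "z = f x" by blast
    show "z \<in> verts (graph_join X (turan_graph N q))"
    proof (cases "\<exists>e i. x = Inr (e, i) \<and> e \<in> edges T \<and> i < 2")
      case True
      then obtain e i where xe: "x = Inr (e, i)" "e \<in> edges T" "i < 2" by blast
      have "2 * h e + i < 2 * card (edges T)" using hl[OF xe(2)] xe(3) by linarith
      then have "2 * h e + i \<in> verts X" using XV by auto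
      then show ?thesis using z xe by (simp add: fdefs graph_join_def)
    next
      case False
      then have "\<exists>c. c < q \<and> f x = Inr (q * g x + c)"
        using x colq unfolding VBm by (auto simp: fdefs)
      then obtain c where c: "c < q" "f x = Inr (q * g x + c)" by blast
      have "q * g x + c < N" using bound_lt[OF c(1) gl[OF x]] N q_def by simp
      then show ?thesis using z c by (simp add: graph_join_def turan_graph_def)
    qed
  qed
  have edg: "f ` ed \<in> edges (graph_join X (turan_graph N q))" if ed: "ed \<in> edges B" for ed
  proof -
    obtain x y e where ed': "ed = {x, y}" "e \<in> edges T" "x \<in> blowup_clique p e"
      "y \<in> blowup_clique p e" "x \<noteq> y"
      using ed by (auto simp: B_def edge_blowup_def)
    have fed: "f ` ed = {f x, f y}" using ed' by simp
    have cm: "z \<in> blowup_clique p e \<longleftrightarrow> (\<exists>v\<in>e. z = Inl v) \<or> (\<exists>i. z = Inr (e, i) \<and> i < q)" for z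
      unfolding q_def by (rule clique_mem)
    have eV: "e \<subseteq> verts T" using wf ed'(2) by (auto simp: wf_graph_def)
    have cB: "z \<in> verts B" if "z \<in> blowup_clique p e" for z
      using that eV ed'(2) unfolding cm VBm by blast
    have xB: "x \<in> verts B" and yB: "y \<in> verts B" using cB ed'(3,4) by auto
    define P where "P z \<longleftrightarrow> (\<exists>i. z = Inr (e, i) \<and> i < 2)" for z :: "'a + 'a set \<times> nat"
    define cl where "cl z = (case z of Inl v \<Rightarrow> col v | Inr (e, i) \<Rightarrow> i)" for z :: "'a + 'a set \<times> nat"
    have onP: "f z = Inl (2 * h e + i)" if "z = Inr (e, i)" "i < 2" for z i
      using that by (simp add: fdefs)
    have offP: "f z = Inr (q * g z + cl z) \<and> cl z < q \<and> q * g z + cl z < N"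
      if "z \<in> blowup_clique p e" "z \<in> verts B" "\<not> P z" for z
    proof -
      have "f z = Inr (q * g z + cl z) \<and> cl z < q"
        using that(1,3) colq unfolding cm P_def by (auto simp: fdefs cl_def)
      then show ?thesis using bound_lt[of "cl z" q "g z" l N] gl[OF that(2)] N q_def by simp
    qed
    have LL: "cl x \<noteq> cl y" if LL: "x = Inl u" "y = Inl v" "u \<in> e" "v \<in> e" for u v
    proof -
      have "card e = 2" using wf ed'(2) by (auto simp: wf_graph_def)
      then obtain a b where ab: "e = {a, b}" "a \<noteq> b" by (auto simp: card_2_iff)
      have "u \<noteq> v" using LL ed'(5) by auto
      then have "{u, v} = e" using LL ab by auto
      then have "adj T u v" using ed'(2) by (simp add: adj_def)
      then show ?thesis using col2 LL by (simp add: cl_def)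
    qed
    have cldiff: "cl x \<noteq> cl y" if "\<not> P x" "\<not> P y"
    proof -
      have xc: "(\<exists>u\<in>e. x = Inl u) \<or> (\<exists>i. x = Inr (e, i) \<and> i \<ge> 2)"
        using ed'(3) that(1) unfolding cm P_def by auto
      have yc: "(\<exists>u\<in>e. y = Inl u) \<or> (\<exists>i. y = Inr (e, i) \<and> i \<ge> 2)"
        using ed'(4) that(2) unfolding cm P_def by auto
      show ?thesis
      proof (cases "\<exists>u\<in>e. x = Inl u")
        case True
        then obtain u where u: "u \<in> e" "x = Inl u" by blast
        show ?thesis
        proof (cases "\<exists>v\<in>e. y = Inl v")
          case True
          then obtain v where v: "v \<in> e" "y = Inl v" by blast
          show ?thesis using LL[OF u(2) v(2) u(1) v(1)] .
        next
          case False
          then obtain j where "y = Inr (e, j)" "j \<ge> 2" using yc by blast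
          then show ?thesis using u col1[of u] by (simp add: cl_def)
        qed
      next
        case False
        then obtain i where i: "x = Inr (e, i)" "i \<ge> 2" using xc by blast
        show ?thesis
        proof (cases "\<exists>v\<in>e. y = Inl v")
          case True
          then obtain v where v: "v \<in> e" "y = Inl v" by blast
          show ?thesis using i v col1[of v] by (simp add: cl_def)
        next
          case False
          then obtain j where "y = Inr (e, j)" "j \<ge> 2" using yc by blast
          then show ?thesis using i ed'(5) by (auto simp: cl_def)
        qed
      qed
    qed
    show ?thesis
    proof (cases "P x")
      case Px: True
      then obtain i where i: "x = Inr (e, i)" "i < 2" by (auto simp: P_def)
      show ?thesis
      proof (cases "P y")
        case True
        then obtain j where j: "y = Inr (e, j)" "j < 2" by (auto simp: P_def)
        have "i \<noteq> j" using i j ed'(5) by auto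
        then have "i = 0 \<and> j = 1 \<or> i = 1 \<and> j = 0" using i j by linarith
        then have "{2 * h e + i, 2 * h e + j} = {2 * h e, Suc (2 * h e)}"
          by (elim disjE) (simp_all add: insert_commute)
        then have "{2 * h e + i, 2 * h e + j} \<in> edges X" using XE[OF hl[OF ed'(2)]] by simp
        then have "{Inl (2 * h e + i), Inl (2 * h e + j)} \<in> edges (graph_join X (turan_graph N q))"
          by (rule path_edge)
        moreover have "f ` ed = {Inl (2 * h e + i), Inl (2 * h e + j)}"
          using fed onP[OF i] onP[OF j] by simp
        ultimately show ?thesis by simp
      next
        case False
        note oy = offP[OF ed'(4) yB False]
        have "2 * h e + i \<in> verts X" using XV hl[OF ed'(2)] i(2) by auto
        then have "{Inl (2 * h e + i), Inr (q * g y + cl y)} \<in> edges (graph_join X (turan_graph N q))"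
          using oy mixed_edge[of "2 * h e + i" X "q * g y + cl y" N q] by simp
        moreover have "f ` ed = {Inl (2 * h e + i), Inr (q * g y + cl y)}"
          using fed onP[OF i] oy by simp
        ultimately show ?thesis by simp
      qed
    next
      case Px: False
      note ox = offP[OF ed'(3) xB Px]
      show ?thesis
      proof (cases "P y")
        case True
        then obtain j where j: "y = Inr (e, j)" "j < 2" by (auto simp: P_def)
        have "2 * h e + j \<in> verts X" using XV hl[OF ed'(2)] j(2) by auto
        then have "{Inr (q * g x + cl x), Inl (2 * h e + j)} \<in> edges (graph_join X (turan_graph N q))"
          using ox mixed_edge[of "2 * h e + j" X "q * g x + cl x" N q] by simp
        moreover have "f ` ed = {Inr (q * g x + cl x), Inl (2 * h e + j)}"
          using fed onP[OF j] ox by simp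
        ultimately show ?thesis by simp
      next
        case False
        note oy = offP[OF ed'(4) yB False]
        have "(q * g x + cl x) mod q \<noteq> (q * g y + cl y) mod q"
          using ox oy cldiff[OF Px False] by simp
        then have "{Inr (q * g x + cl x), Inr (q * g y + cl y)} \<in> edges (graph_join X (turan_graph N q))"
          using ox oy by (intro turan_edge) auto
        moreover have "f ` ed = {Inr (q * g x + cl x), Inr (q * g y + cl y)}"
          using fed ox oy by simp
        ultimately show ?thesis by simp
      qed
    qed
  qed
  show ?thesis unfolding subgraph_iso_def B_def[symmetric] q_def[symmetric]
    using inj rng edg by blast
qed


lemma card_edges_le:
  assumes p: "p \<ge> 3" and wf: "wf_graph T"
  shows "2 * card (edges T) \<le> card (verts (edge_blowup p T))"
proof -
  define q where "q = p - 1"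
  have q2: "q \<ge> 2" using p by (simp add: q_def)
  have finE: "finite (edges T)"
  proof (rule finite_subset)
    show "edges T \<subseteq> Pow (verts T)" using wf by (auto simp: wf_graph_def)
    show "finite (Pow (verts T))" using wf by (simp add: wf_graph_def)
  qed
  have VB: "verts (edge_blowup p T) = Inl ` verts T \<union> (\<lambda>(e, i). Inr (e, i)) ` (edges T \<times> {..<q})"
    by (auto simp: q_def edge_blowup_def)
  have finB: "finite (verts (edge_blowup p T))" using VB finE wf by (simp add: wf_graph_def)
  have "card ((\<lambda>(e, i). Inr (e, i)) ` (edges T \<times> {..<q}) :: ('a + 'a set \<times> nat) set) = card (edges T) * q"
    by (subst card_image) (auto simp: inj_on_def card_cartesian_product)
  moreover have "card ((\<lambda>(e, i). Inr (e, i)) ` (edges T \<times> {..<q}) :: ('a + 'a set \<times> nat) set) \<le> card (verts (edge_blowup p T))"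
    using finB VB by (intro card_mono) auto
  ultimately show ?thesis using q2
    by (metis le_trans mult.commute mult_le_mono2)
qed

theorem lemma2p1:
  fixes p :: nat and T :: "'a ugraph"
  assumes "p \<ge> 3" and "is_tree T"
  defines "l \<equiv> card (verts (edge_blowup p T))"
  shows "subgraph_iso (edge_blowup p T)
           (graph_join (path_graph l) (turan_graph ((p - 1) * l) (p - 1)))
       \<and> subgraph_iso (edge_blowup p T)
           (graph_join (matching_graph l) (turan_graph (2 * (p - 1) * l) (p - 1)))"
proof -
  have wf: "wf_graph T" using assms(2) by (simp add: is_tree_def)
  obtain col :: "'a \<Rightarrow> nat" where col: "\<forall>u. col u < 2" "\<forall>u v. adj T u v \<longrightarrow> col u \<noteq> col v"
    using tree_col[OF assms(2)] by blast
  have cE: "2 * card (edges T) \<le> l" unfolding l_def by (rule card_edges_le[OF assms(1) wf])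
  have P1: "subgraph_iso (edge_blowup p T) (graph_join (path_graph l) (turan_graph ((p - 1) * l) (p - 1)))"
  proof (rule embed[OF assms(1) wf, of col])
    show "\<And>u. col u < 2" using col by blast
    show "\<And>u v. adj T u v \<Longrightarrow> col u \<noteq> col v" using col by blast
    show "l = card (verts (edge_blowup p T))" by (simp add: l_def)
    show "{0..<2 * card (edges T)} \<subseteq> verts (path_graph l)" using cE by (auto simp: path_graph_def)
    show "{2 * k, Suc (2 * k)} \<in> edges (path_graph l)" if "k < card (edges T)" for k
      using that cE by (auto simp: path_graph_def)
  qed simp
  have P2: "subgraph_iso (edge_blowup p T) (graph_join (matching_graph l) (turan_graph (2 * (p - 1) * l) (p - 1)))"
  proof (rule embed[OF assms(1) wf, of col])
    show "\<And>u. col u < 2" using col by blast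
    show "\<And>u v. adj T u v \<Longrightarrow> col u \<noteq> col v" using col by blast
    show "l = card (verts (edge_blowup p T))" by (simp add: l_def)
    show "{0..<2 * card (edges T)} \<subseteq> verts (matching_graph l)" using cE by (auto simp: matching_graph_def)
    show "{2 * k, Suc (2 * k)} \<in> edges (matching_graph l)" if "k < card (edges T)" for k
      using that cE by (auto simp: matching_graph_def)
  qed simp
  show ?thesis using P1 P2 by blast
qed

end
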